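(* Let $L>0$ and let $\alpha,\beta:\mathbb{R}\to\mathbb{R}^2$ be smooth $L$-periodic maps with $\alpha'$ nowhere zero, $\langle\beta,\alpha'\rangle = 0$ and $|\alpha'|^2+|\beta|^2=1$. Let $\gamma(t,s) = \tfrac12(\alpha(s+t)+\alpha(s-t)) + \tfrac12\int_{s-t}^{s+t}\beta(\xi)\,d\xi$, $a=\alpha'+\beta$, $b=\alpha'-\beta$, and let $\psi,\tilde\psi:\mathbb{R}\to\mathbb{R}$ be smooth functions with $a = (\cos\psi,\sin\psi)$ and $b = -(\cos\tilde\psi,\sin\tilde\psi)$. Assume that $\alpha$ has zero rotation index and that the unit tangent map is continuous. Then for any $r$, there do not exist $s_0,s_1$ with $0<s_1-s_0<L$ and $\psi(s_0)=\psi(s_1)=\tilde\psi(r)$; that is, modulo $L$ there is at most one $s$ with $\psi(s) = \tilde\psi(r)$.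
   Context: The rotation index of $\alpha$ is the degree of $\alpha'/|\alpha'|$ as a map from $\mathbb{R}/L\mathbb{Z}$ to the unit circle; when it is zero, $\psi$ and $\tilde\psi$ are $L$-periodic. The unit tangent map is $U(t,s)=\gamma_{,s}(t,s)/|\gamma_{,s}(t,s)|$, defined where $\gamma_{,s}\neq0$ (note $2\gamma_{,s}(t,s)=a(s+t)+b(s-t)$); it is called continuous if for every $t$, $s\mapsto U(t,s)$ extends to a continuous map on all of $\mathbb{R}$. *)

theory Defs
  imports "HOL-Analysis.Analysis"
begin

text \<open>The plane R^2 is modelled by the type complex (with its real inner product).\<close>

definition smooth_fun :: "(real \<Rightarrow> 'a::real_normed_vector) \<Rightarrow> bool" where
  "smooth_fun f \<longleftrightarrow> (\<exists>D :: nat \<Rightarrow> real \<Rightarrow> 'a. D 0 = f \<and>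
      (\<forall>n x. (D n has_vector_derivative D (Suc n) x) (at x)))"

definition signed_integral :: "real \<Rightarrow> real \<Rightarrow> (real \<Rightarrow> complex) \<Rightarrow> complex" where
  "signed_integral u v f = (if u \<le> v then integral {u..v} f else - integral {v..u} f)"

definition gam :: "(real \<Rightarrow> complex) \<Rightarrow> (real \<Rightarrow> complex) \<Rightarrow> real \<Rightarrow> real \<Rightarrow> complex" where
  "gam \<alpha> \<beta> t s = (\<alpha> (s + t) + \<alpha> (s - t)) / 2 + signed_integral (s - t) (s + t) \<beta> / 2"

definition gam_s :: "(real \<Rightarrow> complex) \<Rightarrow> (real \<Rightarrow> complex) \<Rightarrow> real \<Rightarrow> real \<Rightarrow> complex" where
  "gam_s \<alpha> \<beta> t s = vector_derivative (\<lambda>s'. gam \<alpha> \<beta> t s') (at s)"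

text \<open>Unit tangent map U(t,s) (meaningful where gamma_{,s}(t,s) is nonzero).\<close>
definition unit_tangent :: "(real \<Rightarrow> complex) \<Rightarrow> (real \<Rightarrow> complex) \<Rightarrow> real \<Rightarrow> real \<Rightarrow> complex" where
  "unit_tangent \<alpha> \<beta> t s = gam_s \<alpha> \<beta> t s / of_real (norm (gam_s \<alpha> \<beta> t s))"

definition unit_tangent_continuous :: "(real \<Rightarrow> complex) \<Rightarrow> (real \<Rightarrow> complex) \<Rightarrow> bool" where
  "unit_tangent_continuous \<alpha> \<beta> \<longleftrightarrow> (\<forall>t. \<exists>V :: real \<Rightarrow> complex. continuous_on UNIV V \<and>
      (\<forall>s. gam_s \<alpha> \<beta> t s \<noteq> 0 \<longrightarrow> V s = unit_tangent \<alpha> \<beta> t s))"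

text \<open>Rotation index of alpha (period L): degree of alpha'/|alpha'| as a map R/LZ -> S^1,
  computed via a continuous lift theta with alpha'/|alpha'| = cis theta.\<close>
definition rotation_index :: "(real \<Rightarrow> complex) \<Rightarrow> real \<Rightarrow> real" where
  "rotation_index \<alpha> L = (let \<theta> = (SOME \<theta> :: real \<Rightarrow> real. continuous_on UNIV \<theta> \<and>
        (\<forall>t. sgn (vector_derivative \<alpha> (at t)) = cis (\<theta> t)))
     in (\<theta> L - \<theta> 0) / (2 * pi))"

end

theory Submission
  imports Defs
begin


lemma smooth_deriv:
  assumes "smooth_fun f"
  shows "\<exists>f'. (\<forall>x. (f has_vector_derivative f' x) (at x)) \<and> continuous_on UNIV f' \<and> continuous_on UNIV f"
proof -
  obtain D where D0: "D 0 = f" and DD: "\<And>n x. (D n has_vector_derivative D (Suc n) x) (at x)"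
    using assms unfolding smooth_fun_def by blast
  have c: "continuous_on UNIV (D n)" for n
    by (metis DD continuous_at_imp_continuous_on has_vector_derivative_continuous)
  show ?thesis using DD[of 0] c[of 1] c[of 0] D0 by auto
qed

lemma cis_diff_aux: "cis (M + D) - cis (M - D) = 2 * \<i> * cis M * complex_of_real (sin D)"
  by (simp add: complex_eq_iff cos_add sin_add cos_diff sin_diff)

lemma cis_diff: "cis A - cis B = 2 * \<i> * cis ((A+B)/2) * complex_of_real (sin ((A-B)/2))"
  using cis_diff_aux[of "(A+B)/2" "(A-B)/2"] by (simp add: field_simps)

lemma cis_eq_int: assumes "cis a = cis b" shows "\<exists>k::int. a = b + 2*pi*k"
proof -
  have "cis (a - b) = 1" using assms by (simp add: cis_divide[symmetric])
  then have "cos (a - b) = 1" by (simp add: complex_eq_iff)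
  then have "\<exists>n::int. a - b = n * 2 * pi" using cos_one_2pi_int by blast
  then obtain n::int where "a - b = real_of_int n * 2 * pi" by blast
  then show ?thesis by (intro exI[of _ n]) (simp add: algebra_simps)
qed

lemma pi_step: "(a::real) + 1 \<le> b \<Longrightarrow> 2*pi*a + pi \<le> 2*pi*b"
proof -
  assume h: "a + 1 \<le> b"
  have "pi*(2*a+1) \<le> pi*(2*b)" using pi_gt_zero h by (intro mult_left_mono) auto
  then show ?thesis by (simp add: algebra_simps)
qed

lemma const_2pi:
  fixes f :: "real \<Rightarrow> real"
  assumes c: "continuous_on UNIV f" and i: "\<And>x. \<exists>k::int. f x = 2*pi*k"
  shows "f x = f y"
proof (rule ccontr)
  assume ne: "f x \<noteq> f y"
  obtain m::int where m: "f x = 2*pi*m" using i by blast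
  obtain n::int where n: "f y = 2*pi*n" using i by blast
  have "m \<noteq> n" using m n ne by auto
  have cab: "continuous_on {a..b} f" for a b using c by (rule continuous_on_subset) auto
  have "\<exists>z. f z = 2*pi*m + (if m < n then pi else -pi)"
  proof (cases "x \<le> y")
    case True
    show ?thesis
    proof (cases "m < n")
      case True
      then have "real_of_int m + 1 \<le> n" by linarith
      then have "2*pi*m + pi \<le> 2*pi*n" by (rule pi_step)
      then show ?thesis using IVT'[where f=f and a=x and b=y and y="2*pi*m + pi"] cab[of x y] \<open>x \<le> y\<close> m n True by auto
    next
      case False
      then have "real_of_int n + 1 \<le> m" using \<open>m \<noteq> n\<close> by linarith
      then have "2*pi*n \<le> 2*pi*m - pi" using pi_step[of n m] by simp
      then show ?thesis using IVT2'[where f=f and a=x and b=y and y="2*pi*m - pi"] cab[of x y] \<open>x \<le> y\<close> m n False by auto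
    qed
  next
    case False
    show ?thesis
    proof (cases "m < n")
      case True
      then have "real_of_int m + 1 \<le> n" by linarith
      then have "2*pi*m + pi \<le> 2*pi*n" by (rule pi_step)
      then show ?thesis using IVT2'[where f=f and a=y and b=x and y="2*pi*m + pi"] cab[of y x] False m n True by auto
    next
      case False
      then have "real_of_int n + 1 \<le> m" using \<open>m \<noteq> n\<close> by linarith
      then have "2*pi*n \<le> 2*pi*m - pi" using pi_step[of n m] by simp
      then show ?thesis using IVT'[where f=f and a=y and b=x and y="2*pi*m - pi"] cab[of y x] \<open>\<not> x \<le> y\<close> m n False by auto
    qed
  qed
  then obtain z where z: "f z = 2*pi*m + (if m < n then pi else -pi)" by blast
  obtain j::int where j: "f z = 2*pi*j" using i by blast
  have e: "pi * (2*(real_of_int j - m)) = pi * (if m < n then 1 else -1)" using z j by (auto simp: algebra_simps)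
  then have "2*(real_of_int j - m) = (if m < n then 1 else -1)" using mult_left_cancel[OF pi_neq_zero] by blast
  then have "real_of_int (2*(j-m)) = real_of_int (if m < n then 1 else -1)" by auto
  then have "2*(j-m) = (if m < n then 1 else -1)" by (simp only: of_int_eq_iff)
  then have "(2*(j-m)) mod 2 = (if m < n then 1 else -1) mod (2::int)" by simp
  then show False by (cases "m < n") simp_all
qed

lemma dense_inc:
  fixes f f' :: "real \<Rightarrow> real"
  assumes der: "\<And>x. (f has_real_derivative f' x) (at x)"
    and x12: "x1 < x2" and l: "f x1 < l1" "l1 < l2" "l2 < f x2"
  shows "\<exists>\<xi>. f' \<xi> > 0 \<and> l1 \<le> f \<xi> \<and> f \<xi> \<le> l2"
proof -
  have cf: "continuous_on S f" for S
    by (meson DERIV_continuous continuous_at_imp_continuous_on der)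
  define S2 where "S2 = {x \<in> {x1..x2}. f x = l2}"
  have "S2 \<noteq> {}" using IVT'[of f x1 l2 x2] cf l x12 unfolding S2_def by force
  moreover have "bdd_below S2" unfolding S2_def by (rule bdd_belowI[of _ x1]) auto
  moreover have "closed S2" unfolding S2_def by (rule continuous_closed_preimage_constant[OF cf]) auto
  ultimately have xbS: "Inf S2 \<in> S2" by (rule closed_contains_Inf)
  define xb where "xb = Inf S2"
  have xb: "x1 \<le> xb" "xb \<le> x2" "f xb = l2" using xbS unfolding xb_def S2_def by auto
  have below2: "f x < l2" if "x1 \<le> x" "x < xb" for x
  proof (rule ccontr)
    assume "\<not> f x < l2"
    have "\<exists>y. x1 \<le> y \<and> y \<le> x \<and> f y = l2"
      by (rule IVT'[OF _ _ _ cf]) (use l that \<open>\<not> f x < l2\<close> in auto)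
    then obtain y where "x1 \<le> y" "y \<le> x" "f y = l2" by blast
    then have "y \<in> S2" using that xb unfolding S2_def by auto
    then have "xb \<le> y" unfolding xb_def by (rule cInf_lower) (simp add: S2_def bdd_below_def, auto)
    then show False using \<open>y \<le> x\<close> \<open>x < xb\<close> by auto
  qed
  define S1 where "S1 = {x \<in> {x1..xb}. f x = l1}"
  have "S1 \<noteq> {}" using IVT'[of f x1 l1 xb] cf l xb unfolding S1_def by force
  moreover have "bdd_above S1" unfolding S1_def by (rule bdd_aboveI[of _ xb]) auto
  moreover have "closed S1" unfolding S1_def by (rule continuous_closed_preimage_constant[OF cf]) auto
  ultimately have xaS: "Sup S1 \<in> S1" by (rule closed_contains_Sup)
  define xa where "xa = Sup S1"
  have xa: "x1 \<le> xa" "xa \<le> xb" "f xa = l1" using xaS unfolding xa_def S1_def by auto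
  have above1: "f x > l1" if "xa < x" "x \<le> xb" for x
  proof (rule ccontr)
    assume "\<not> f x > l1"
    have "\<exists>y. x \<le> y \<and> y \<le> xb \<and> f y = l1"
      by (rule IVT'[OF _ _ _ cf]) (use l xb that \<open>\<not> f x > l1\<close> in auto)
    then obtain y where "x \<le> y" "y \<le> xb" "f y = l1" by blast
    then have "y \<in> S1" using that xa unfolding S1_def by auto
    then have "y \<le> xa" unfolding xa_def by (rule cSup_upper) (simp add: S1_def bdd_above_def, auto)
    then show False using \<open>x \<le> y\<close> \<open>xa < x\<close> by auto
  qed
  have "xa \<noteq> xb" using xa xb l by auto
  then have "xa < xb" using xa by auto
  then obtain z where z: "xa < z" "z < xb" "f xb - f xa = (xb - xa) * f' z"
    using MVT2[of xa xb f f'] der by blast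
  have "f' z > 0" using z xa xb l \<open>xa < xb\<close> by (metis diff_gt_0_iff_gt zero_less_mult_pos)
  moreover have "l1 \<le> f z" "f z \<le> l2" using above1[of z] below2[of z] z xa by auto
  ultimately show ?thesis by blast
qed




lemma phi_calc:
  assumes "sin D \<noteq> 0"
  shows "((2 * \<i> * cis M * complex_of_real (sin D)) / 2 / complex_of_real (norm ((2 * \<i> * cis M * complex_of_real (sin D)) / 2)))
          * (- \<i>) * cis (- M) = complex_of_real (sgn (sin D))"
proof -
  have n: "norm ((2 * \<i> * cis M * complex_of_real (sin D)) / 2) = \<bar>sin D\<bar>"
    by (simp add: norm_mult)
  have c: "cis M * cis (- M) = 1" by (simp add: cis_mult)
  have "((2 * \<i> * cis M * complex_of_real (sin D)) / 2 / complex_of_real \<bar>sin D\<bar>) * (- \<i>) * cis (- M)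
      = (cis M * cis (- M)) * complex_of_real (sin D / \<bar>sin D\<bar>)"
    by (simp add: field_simps)
  also have "\<dots> = complex_of_real (sgn (sin D))" using c assms by (simp add: sgn_real_def)
  finally show ?thesis using n by simp
qed

lemma sin_shift_prod: "sin (of_int k * pi + x) * sin (of_int k * pi + y) = sin x * sin y"
proof -
  have s: "sin (of_int k * pi) = 0" by (metis mult.commute sin_npi_int)
  have c: "cos (of_int k * pi) ^ 2 = 1" using s sin_cos_squared_add[of "of_int k * pi"] by simp
  show ?thesis using c by (simp add: sin_add s power2_eq_square algebra_simps)
qed

lemma no_cross:
  fixes \<alpha> \<beta> :: "real \<Rightarrow> complex" and \<psi> \<psi>t d\<psi> d\<psi>t :: "real \<Rightarrow> real" and k :: int
  assumes cont: "unit_tangent_continuous \<alpha> \<beta>"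
    and GS: "\<And>t s. gam_s \<alpha> \<beta> t s = (cis (\<psi> (s+t)) - cis (\<psi>t (s-t))) / 2"
    and dpsi: "\<And>x. (\<psi> has_real_derivative d\<psi> x) (at x)"
    and dpsit: "\<And>x. (\<psi>t has_real_derivative d\<psi>t x) (at x)"
    and eq: "\<psi> u - \<psi>t v = 2*pi*k" and pu: "d\<psi> u > 0" and nv: "d\<psi>t v < 0"
  shows False
proof -
  define t where "t = (u - v)/2"
  define s0 where "s0 = (u + v)/2"
  have st: "s0 + t = u" "s0 - t = v" unfolding t_def s0_def by (auto simp: field_simps)
  obtain V where Vc: "continuous_on UNIV V"
    and VU: "\<And>s. gam_s \<alpha> \<beta> t s \<noteq> 0 \<Longrightarrow> V s = unit_tangent \<alpha> \<beta> t s"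
    using cont unfolding unit_tangent_continuous_def by blast
  define g where "g s = \<psi> (s+t) - \<psi>t (s-t)" for s
  have gder: "(g has_real_derivative (d\<psi> (s+t) - d\<psi>t (s-t))) (at s)" for s
  proof -
    have 1: "((\<lambda>s. \<psi> (s+t)) has_real_derivative d\<psi> (s+t)) (at s)"
      using DERIV_shift[of \<psi> "d\<psi> (s+t)" s t] dpsi by simp
    have 2: "((\<lambda>s. \<psi>t (s + (-t))) has_real_derivative d\<psi>t (s-t)) (at s)"
      using DERIV_shift[of \<psi>t "d\<psi>t (s-t)" s "-t"] dpsit by simp
    show ?thesis unfolding g_def using DERIV_diff[OF 1 2] by simp
  qed
  have gs0: "g s0 = 2*pi*k" using eq st unfolding g_def by simp
  have gpos: "d\<psi> (s0+t) - d\<psi>t (s0-t) > 0" using st pu nv by simp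
  obtain d1 where d1: "d1 > 0" "\<And>h. h > 0 \<Longrightarrow> h < d1 \<Longrightarrow> g s0 < g (s0 + h)"
    using DERIV_pos_inc_right[OF gder gpos] by blast
  obtain d2 where d2: "d2 > 0" "\<And>h. h > 0 \<Longrightarrow> h < d2 \<Longrightarrow> g (s0 - h) < g s0"
    using DERIV_pos_inc_left[OF gder gpos] by blast
  have "isCont g s0" using gder by (rule DERIV_isCont)
  then have "\<forall>e>0. \<exists>d>0. \<forall>s. dist s s0 < d \<longrightarrow> dist (g s) (g s0) < e"
    unfolding continuous_at_eps_delta .
  moreover have "(2*pi::real) > 0" by simp
  ultimately obtain d3 where d3: "d3 > 0" "\<And>s. dist s s0 < d3 \<Longrightarrow> dist (g s) (g s0) < 2*pi"
    by blast
  have cpsi: "continuous_on UNIV \<psi>"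
    by (meson DERIV_continuous continuous_at_imp_continuous_on dpsi)
  have cpsit: "continuous_on UNIV \<psi>t"
    by (meson DERIV_continuous continuous_at_imp_continuous_on dpsit)
  define \<Phi> where "\<Phi> s = V s * (- \<i>) * cis (- ((\<psi> (s+t) + \<psi>t (s-t))/2))" for s
  have "continuous_on UNIV \<Phi>" unfolding \<Phi>_def
    by (intro continuous_intros Vc continuous_on_compose2[OF cpsi] continuous_on_compose2[OF cpsit]) auto
  then have "continuous (at s0) \<Phi>" by (simp add: continuous_on_eq_continuous_at)
  then have "\<forall>e>0. \<exists>d>0. \<forall>s. dist s s0 < d \<longrightarrow> dist (\<Phi> s) (\<Phi> s0) < e"
    unfolding continuous_at_eps_delta .
  then obtain d4 where d4: "d4 > 0" "\<And>s. dist s s0 < d4 \<Longrightarrow> dist (\<Phi> s) (\<Phi> s0) < 1"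
    using zero_less_one by blast
  have Phi_val: "\<Phi> s = complex_of_real (sgn (sin (g s / 2)))" if ns: "sin (g s / 2) \<noteq> 0" for s
  proof -
    define M where "M = (\<psi> (s+t) + \<psi>t (s-t))/2"
    define D where "D = (\<psi> (s+t) - \<psi>t (s-t))/2"
    have gsd: "gam_s \<alpha> \<beta> t s = (2 * \<i> * cis M * complex_of_real (sin D)) / 2"
      unfolding GS M_def D_def by (simp add: cis_diff)
    have Dg: "D = g s / 2" unfolding D_def g_def ..
    have nsD: "sin D \<noteq> 0" using ns unfolding Dg .
    have "gam_s \<alpha> \<beta> t s \<noteq> 0" using gsd nsD by simp
    then have "V s = unit_tangent \<alpha> \<beta> t s" by (rule VU)
    then have "\<Phi> s = ((2 * \<i> * cis M * complex_of_real (sin D)) / 2 / complex_of_real (norm ((2 * \<i> * cis M * complex_of_real (sin D)) / 2)))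
          * (- \<i>) * cis (- M)"
      unfolding \<Phi>_def unit_tangent_def gsd M_def by simp
    also have "\<dots> = complex_of_real (sgn (sin D))" by (rule phi_calc[OF nsD])
    finally show ?thesis using Dg by simp
  qed
  define h where "h = Min {d1, d2, d3, d4} / 2"
  have h: "h > 0" "h < d1" "h < d2" "h < d3" "h < d4" unfolding h_def using d1 d2 d3 d4 by auto
  have gp: "2*pi*k < g (s0+h)" "g (s0+h) < 2*pi*k + 2*pi"
    using d1(2)[OF h(1) h(2)] d3(2)[of "s0+h"] h gs0 by (auto simp: dist_real_def)
  have gm: "g (s0-h) < 2*pi*k" "2*pi*k - 2*pi < g (s0-h)"
    using d2(2)[OF h(1) h(3)] d3(2)[of "s0-h"] h gs0 by (auto simp: dist_real_def)
  define x where "x = (g (s0+h) - 2*pi*k)/2"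
  define y where "y = (g (s0-h) - 2*pi*k)/2"
  have xy: "0 < x" "x < pi" "-pi < y" "y < 0" using gp gm unfolding x_def y_def by auto
  have sx: "sin x > 0" using xy by (intro sin_gt_zero) auto
  have sy: "sin y < 0" using xy sin_gt_zero[of "-y"] by auto
  have ex: "g (s0+h) / 2 = of_int k * pi + x" "g (s0-h) / 2 = of_int k * pi + y"
    unfolding x_def y_def by (auto simp: field_simps)
  have prod: "sin (g (s0+h) / 2) * sin (g (s0-h) / 2) < 0"
    unfolding ex sin_shift_prod using sx sy by (simp add: mult_pos_neg)
  then have n1: "sin (g (s0+h) / 2) \<noteq> 0" "sin (g (s0-h) / 2) \<noteq> 0" by auto
  have "sgn (sin (g (s0+h) / 2)) = - sgn (sin (g (s0-h) / 2))"
    using prod by (auto simp: sgn_real_def mult_less_0_iff)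
  then have opp: "\<Phi> (s0+h) = - \<Phi> (s0-h)" "norm (\<Phi> (s0-h)) = 1"
    using Phi_val[OF n1(1)] Phi_val[OF n1(2)] n1 by (auto simp: sgn_real_def)
  have "dist (\<Phi> (s0+h)) (\<Phi> s0) < 1" "dist (\<Phi> (s0-h)) (\<Phi> s0) < 1"
    using d4(2)[of "s0+h"] d4(2)[of "s0-h"] h by (auto simp: dist_real_def)
  then have "dist (\<Phi> (s0+h)) (\<Phi> (s0-h)) < 2" by (smt (verit) dist_commute dist_triangle)
  moreover have "dist (\<Phi> (s0+h)) (\<Phi> (s0-h)) = 2"
    using opp by (simp add: dist_norm norm_minus_commute)
  ultimately show False by simp
qed




lemma key:
  fixes \<psi> \<psi>t d\<psi> d\<psi>t :: "real \<Rightarrow> real" and k :: int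
  assumes NC: "\<And>u v. \<psi> u - \<psi>t v = 2*pi*k \<Longrightarrow> d\<psi> u > 0 \<Longrightarrow> d\<psi>t v < 0 \<Longrightarrow> False"
    and dpsi: "\<And>x. (\<psi> has_real_derivative d\<psi> x) (at x)"
    and dpsit: "\<And>x. (\<psi>t has_real_derivative d\<psi>t x) (at x)"
    and cd: "continuous_on UNIV d\<psi>"
    and L: "L > 0" and perp: "\<And>x. \<psi> (x + L) = \<psi> x" and perpt: "\<And>x. \<psi>t (x + L) = \<psi>t x"
    and bp: "\<And>x. m1 \<le> \<psi> x" "\<And>x. \<psi> x \<le> M1" and xa: "xa \<in> {0..L}" "\<psi> xa = m1" and xb: "xb \<in> {0..L}" "\<psi> xb = M1"
    and bt: "\<And>x. m2 \<le> \<psi>t x" "\<And>x. \<psi>t x \<le> M2" and ya: "ya \<in> {0..L}" "\<psi>t ya = m2" and yb: "yb \<in> {0..L}" "\<psi>t yb = M2"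
    and nc: "m1 < M1" "m2 < M2"
  shows "\<not> (m1 - M2 < 2*pi*k \<and> 2*pi*k < M1 - m2)"
proof
  assume A: "m1 - M2 < 2*pi*k \<and> 2*pi*k < M1 - m2"
  define lo where "lo = max m1 (2*pi*k + m2)"
  define hi where "hi = min M1 (2*pi*k + M2)"
  have lohi: "lo < hi" using A nc unfolding lo_def hi_def by auto
  obtain x2 where x2: "xa < x2" "\<psi> x2 = M1"
  proof (cases "xa < xb")
    case True then show ?thesis using that xb by blast
  next
    case False
    have "xb + L \<noteq> xa" using perp[of xb] xa xb nc by auto
    then have "xa < xb + L" using xa xb by auto
    then show ?thesis using that perp[of xb] xb by auto
  qed
  obtain \<xi> where \<xi>: "d\<psi> \<xi> > 0" "lo + (hi-lo)/3 \<le> \<psi> \<xi>" "\<psi> \<xi> \<le> lo + 2*(hi-lo)/3"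
  proof -
    have "m1 \<le> lo" "hi \<le> M1" unfolding lo_def hi_def by auto
    note h = this xa x2 lohi
    have c1: "\<psi> xa < lo + (hi-lo)/3" using h by (auto simp: field_simps)
    have c2: "lo + (hi-lo)/3 < lo + 2*(hi-lo)/3" using h by (auto simp: field_simps)
    have c3: "lo + 2*(hi-lo)/3 < \<psi> x2" using h by (auto simp: field_simps)
    show ?thesis using dense_inc[OF dpsi x2(1) c1 c2 c3] that by blast
  qed
  have "continuous (at \<xi>) d\<psi>" using cd by (simp add: continuous_on_eq_continuous_at)
  then have "\<forall>e>0. \<exists>d>0. \<forall>y. dist y \<xi> < d \<longrightarrow> dist (d\<psi> y) (d\<psi> \<xi>) < e"
    unfolding continuous_at_eps_delta .
  then obtain \<delta> where \<delta>: "\<delta> > 0" "\<And>y. dist y \<xi> < \<delta> \<Longrightarrow> dist (d\<psi> y) (d\<psi> \<xi>) < d\<psi> \<xi>"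
    using \<xi>(1) by blast
  have dpos: "d\<psi> y > 0" if "dist y \<xi> < \<delta>" for y
    using \<delta>(2)[OF that] by (auto simp: dist_real_def)
  define a where "a = \<xi> - \<delta>/2"
  define b where "b = \<xi> + \<delta>/2"
  have "\<psi> a < \<psi> \<xi>"
    by (rule DERIV_pos_imp_increasing) (use \<delta>(1) in \<open>auto simp: a_def intro!: exI dpsi dpos simp: dist_real_def\<close>)
  have "\<psi> \<xi> < \<psi> b"
    by (rule DERIV_pos_imp_increasing) (use \<delta>(1) in \<open>auto simp: b_def intro!: exI dpsi dpos simp: dist_real_def\<close>)
  define \<mu>1 where "\<mu>1 = max (\<psi> a) lo"
  define \<mu>2 where "\<mu>2 = min (\<psi> b) hi"
  have xilo: "lo < \<psi> \<xi>" "\<psi> \<xi> < hi" using \<xi> lohi by (auto simp: field_simps)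
  have mu: "\<mu>1 < \<mu>2" using xilo \<open>\<psi> a < \<psi> \<xi>\<close> \<open>\<psi> \<xi> < \<psi> b\<close> \<xi> lohi unfolding \<mu>1_def \<mu>2_def by auto
  obtain y2 where y2: "yb < y2" "\<psi>t y2 = m2"
  proof (cases "yb < ya")
    case True then show ?thesis using that ya by blast
  next
    case False
    have "ya + L \<noteq> yb" using perpt[of ya] ya yb nc by auto
    then have "yb < ya + L" using ya yb by auto
    then show ?thesis using that perpt[of ya] ya by auto
  qed
  have dmt: "\<And>x. ((\<lambda>x. - \<psi>t x) has_real_derivative - d\<psi>t x) (at x)"
    using dpsit by (intro DERIV_minus)
  define l1 where "l1 = \<mu>1 + (\<mu>2-\<mu>1)/3"
  define l2 where "l2 = \<mu>1 + 2*(\<mu>2-\<mu>1)/3"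
  have "\<mu>1 \<ge> lo" "\<mu>2 \<le> hi" "\<mu>1 \<ge> \<psi> a" "\<mu>2 \<le> \<psi> b" unfolding \<mu>1_def \<mu>2_def by auto
  then have ll: "l1 < l2" "\<psi> a < l1" "l2 < \<psi> b" "lo < l1" "l2 < hi"
    using mu unfolding l1_def l2_def by (auto simp: field_simps)
  then have ll2: "2*pi*k + m2 < l1" "l2 < 2*pi*k + M2" unfolding lo_def hi_def by auto
  obtain \<eta> where \<eta>: "- d\<psi>t \<eta> > 0" "- (l2 - 2*pi*k) \<le> - \<psi>t \<eta>" "- \<psi>t \<eta> \<le> - (l1 - 2*pi*k)"
    using dense_inc[OF dmt y2(1), of "- (l2 - 2*pi*k)" "- (l1 - 2*pi*k)"] yb y2 ll ll2 by auto
  have cpsi: "continuous_on {a..b} \<psi>"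
    by (meson DERIV_continuous continuous_at_imp_continuous_on dpsi)
  have ab: "a \<le> b" using \<delta>(1) by (simp add: a_def b_def)
  have "\<exists>u. a \<le> u \<and> u \<le> b \<and> \<psi> u = \<psi>t \<eta> + 2*pi*k"
    by (rule IVT'[OF _ _ ab cpsi]) (use \<eta> ll in auto)
  then obtain u where u: "a \<le> u" "u \<le> b" "\<psi> u = \<psi>t \<eta> + 2*pi*k" by blast
  have "dist u \<xi> < \<delta>" using u \<delta>(1) by (auto simp: a_def b_def dist_real_def)
  then have "d\<psi> u > 0" by (rule dpos)
  moreover have "d\<psi>t \<eta> < 0" using \<eta> by simp
  moreover have "\<psi> u - \<psi>t \<eta> = 2*pi*k" using u by simp
  ultimately show False using NC by blast
qed




lemma rot_re:
  assumes "((\<lambda>x. cis (f x)) has_integral I) S"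
  shows "((\<lambda>x. cos (f x - \<kappa>)) has_integral Re (cis (-\<kappa>) * I)) S"
proof -
  have "((\<lambda>x. cis (-\<kappa>) * cis (f x)) has_integral (cis (-\<kappa>) * I)) S"
    by (rule has_integral_mult_right[OF assms])
  from has_integral_linear[OF this bounded_linear_Re]
  show ?thesis by (simp add: comp_def cis_mult)
qed

lemma zero_from_int:
  fixes F :: "real \<Rightarrow> real"
  assumes L: "L > 0" and c: "continuous_on {0..L} F" and nn: "\<And>x. x \<in> {0..L} \<Longrightarrow> 0 \<le> F x"
    and i: "(F has_integral 0) {0..L}" and x: "x \<in> {0..L}"
  shows "F x = 0"
  using has_integral_0_cbox_imp_0[of 0 L F x] assms by (auto simp: cbox_interval box_real)

lemma cos_ge_half:
  assumes "\<bar>y\<bar> \<le> P/2" "P \<le> 2*pi" shows "cos (P/2) \<le> cos y"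
proof -
  have "cos y = cos \<bar>y\<bar>" by simp
  moreover have "cos (P/2) \<le> cos \<bar>y\<bar>" using assms by (subst cos_mono_le_eq) auto
  ultimately show ?thesis by simp
qed

lemma cos_le_half:
  assumes "P/2 - 2*pi \<le> z" "z \<le> - P/2" "0 \<le> P" "P \<le> 2*pi" shows "cos z \<le> cos (P/2)"
proof -
  define w where "w = - z"
  have w: "P/2 \<le> w" "w \<le> 2*pi - P/2" using assms unfolding w_def by auto
  have cz: "cos z = cos w" unfolding w_def by simp
  show ?thesis
  proof (cases "w \<le> pi")
    case True
    then show ?thesis unfolding cz using w assms by (subst cos_mono_le_eq) auto
  next
    case False
    have "cos w = cos (2*pi - w)" by simp
    moreover have "cos (2*pi - w) \<le> cos (P/2)" using w False assms by (subst cos_mono_le_eq) auto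
    ultimately show ?thesis unfolding cz by simp
  qed
qed

lemma closure_contra:
  fixes f g :: "real \<Rightarrow> real"
  assumes L: "L > 0" and cf: "continuous_on {0..L} f" and cg: "continuous_on {0..L} g"
    and intf: "((\<lambda>x. cis (f x)) has_integral I) {0..L}"
    and intg: "((\<lambda>x. cis (g x)) has_integral I) {0..L}"
    and bf: "\<And>x. x \<in> {0..L} \<Longrightarrow> c \<le> f x \<and> f x \<le> c + P"
    and bg: "\<And>x. x \<in> {0..L} \<Longrightarrow> c + P - 2*pi \<le> g x \<and> g x \<le> c"
    and P: "0 < P" "P \<le> 2*pi"
    and x0: "x0 \<in> {0..L}" "f x0 = c" and x1: "x1 \<in> {0..L}" "f x1 = c + P"
  shows False
proof -
  define \<kappa> where "\<kappa> = c + P/2"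
  define J where "J = Re (cis (-\<kappa>) * I)"
  have ic: "((\<lambda>x. cos (P/2)) has_integral L * cos (P/2)) {0..L}"
    using has_integral_const_real[of "cos (P/2)" 0 L] L by simp
  have iF: "((\<lambda>x. cos (f x - \<kappa>) - cos (P/2)) has_integral (J - L * cos (P/2))) {0..L}"
    unfolding J_def by (intro has_integral_diff rot_re intf ic)
  have iG: "((\<lambda>x. cos (g x - \<kappa>) - cos (P/2)) has_integral (J - L * cos (P/2))) {0..L}"
    unfolding J_def by (intro has_integral_diff rot_re intg ic)
  have Fnn: "0 \<le> cos (f x - \<kappa>) - cos (P/2)" if "x \<in> {0..L}" for x
  proof -
    have "\<bar>f x - \<kappa>\<bar> \<le> P/2" using bf[OF that] unfolding \<kappa>_def abs_le_iff by auto
    then show ?thesis using cos_ge_half[of "f x - \<kappa>" P] P by auto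
  qed
  have Gnp: "cos (g x - \<kappa>) - cos (P/2) \<le> 0" if "x \<in> {0..L}" for x
    using cos_le_half[of P "g x - \<kappa>"] bg[OF that] P unfolding \<kappa>_def by auto
  have "0 \<le> J - L * cos (P/2)" using has_integral_nonneg[OF iF Fnn] by simp
  moreover have "J - L * cos (P/2) \<le> 0"
    using has_integral_nonneg[of "\<lambda>x. - (cos (g x - \<kappa>) - cos (P/2))", OF has_integral_neg[OF iG]] Gnp by force
  ultimately have "J - L * cos (P/2) = 0" by linarith
  then have iF0: "((\<lambda>x. cos (f x - \<kappa>) - cos (P/2)) has_integral 0) {0..L}" using iF by simp
  have cF: "continuous_on {0..L} (\<lambda>x. cos (f x - \<kappa>) - cos (P/2))"
    by (intro continuous_intros cf)
  have feq: "f x = c \<or> f x = c + P" if x: "x \<in> {0..L}" for x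
  proof -
    have "cos (f x - \<kappa>) = cos (P/2)" using zero_from_int[OF L cF Fnn iF0 x] by simp
    then have "cos \<bar>f x - \<kappa>\<bar> = cos (P/2)" by simp
    moreover have "\<bar>f x - \<kappa>\<bar> \<le> pi" "P/2 \<le> pi" using bf[OF x] P unfolding \<kappa>_def by auto
    ultimately have "\<bar>f x - \<kappa>\<bar> = P/2" using P cos_inj_pi[of "\<bar>f x - \<kappa>\<bar>" "P/2"] by auto
    then show ?thesis unfolding \<kappa>_def abs_eq_iff by (auto simp: field_simps)
  qed
  have "\<exists>z. z \<in> {0..L} \<and> f z = c + P/2"
  proof (cases "x0 \<le> x1")
    case True
    have "continuous_on {x0..x1} f" by (rule continuous_on_subset[OF cf]) (use x0 x1 in auto)
    then have "\<exists>z. x0 \<le> z \<and> z \<le> x1 \<and> f z = c + P/2"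
      by (intro IVT'[where f=f]) (use x0 x1 P True in auto)
    then obtain z where "x0 \<le> z" "z \<le> x1" "f z = c + P/2" by blast
    then show ?thesis using x0 x1 by (intro exI[of _ z]) auto
  next
    case False
    have "continuous_on {x1..x0} f" by (rule continuous_on_subset[OF cf]) (use x0 x1 in auto)
    then have "\<exists>z. x1 \<le> z \<and> z \<le> x0 \<and> f z = c + P/2"
      by (intro IVT2'[where f=f]) (use x0 x1 P False in auto)
    then obtain z where "x1 \<le> z" "z \<le> x0" "f z = c + P/2" by blast
    then show ?thesis using x0 x1 by (intro exI[of _ z]) auto
  qed
  then obtain z where "z \<in> {0..L}" "f z = c + P/2" by blast
  then show False using feq[of z] P by auto
qed

lemma const_contra:
  fixes g :: "real \<Rightarrow> real"
  assumes L: "L > 0" and cg: "continuous_on {0..L} g"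
    and intg: "((\<lambda>x. cis (g x)) has_integral (complex_of_real L * cis c)) {0..L}"
  shows "cis (g 0) = cis c"
proof -
  have i: "((\<lambda>x. cos (g x - c)) has_integral L) {0..L}"
  proof -
    have "L * (cos c * cos c + sin c * sin c) = L" by (simp add: sin_cos_squared_add3)
    moreover have "cos c * (L * cos c) + sin c * (L * sin c) = L * (cos c * cos c + sin c * sin c)"
      by algebra
    ultimately have e2: "cos c * (L * cos c) + sin c * (L * sin c) = L" by simp
    show ?thesis using rot_re[OF intg, of c] e2 by (simp add: cis_mult)
  qed
  have i2: "((\<lambda>x. 1 - cos (g x - c)) has_integral 0) {0..L}"
    using has_integral_diff[OF has_integral_const_real[of 1 0 L] i] L by simp
  have "1 - cos (g 0 - c) = 0"
    by (rule zero_from_int[OF L _ _ i2]) (use L in \<open>auto intro!: continuous_intros cg\<close>)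
  then have co: "cos (g 0 - c) = 1" by simp
  then have "sin (g 0 - c) = 0" using sin_cos_squared_add[of "g 0 - c"] by simp
  then have c1: "cis (g 0 - c) = 1" using co by (simp add: complex_eq_iff)
  have "cis (g 0) = cis (g 0 - c) * cis c" by (simp add: cis_mult)
  then show ?thesis using c1 by simp
qed




lemma shift_vd:
  fixes f :: "real \<Rightarrow> 'a::real_normed_vector"
  assumes "(f has_vector_derivative f') (at (x + c))"
  shows "((\<lambda>y. f (y + c)) has_vector_derivative f') (at x)"
proof -
  have "((\<lambda>y. y + c) has_real_derivative 1) (at x)" by (auto intro!: derivative_eq_intros)
  then have d: "((\<lambda>y. y + c) has_vector_derivative 1) (at x)"
    by (simp add: has_real_derivative_iff_has_vector_derivative)
  from vector_diff_chain_at[OF d, of f f'] assms show ?thesis by (simp add: o_def)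
qed

lemma periodic_nat:
  fixes f :: "real \<Rightarrow> 'a" and L :: real
  assumes per: "\<And>x. f (x + L) = f x"
  shows "f (x + real n * L) = f x"
proof (induction n)
  case 0 then show ?case by simp
next
  case (Suc n)
  have "f (x + real (Suc n) * L) = f ((x + real n * L) + L)" by (simp add: algebra_simps)
  also have "\<dots> = f x" using per Suc by simp
  finally show ?case .
qed

lemma periodic_int:
  fixes f :: "real \<Rightarrow> 'a" and L :: real
  assumes per: "\<And>x. f (x + L) = f x"
  shows "f (x + real_of_int n * L) = f x"
proof (cases "n \<ge> 0")
  case True
  then obtain k where "n = int k" by (metis nonneg_eq_int)
  then show ?thesis using periodic_nat[where f=f and L=L, OF per, of x k] by simp
next
  case False
  then obtain k where k: "n = - int k" by (metis nonpos_int_cases not_le order_less_imp_le)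
  have "f ((x - real k * L) + real k * L) = f (x - real k * L)" by (rule periodic_nat[where f=f and L=L, OF per])
  then show ?thesis using k by simp
qed

lemma periodic_reduce:
  fixes f :: "real \<Rightarrow> 'a" and L x :: real
  assumes per: "\<And>x. f (x + L) = f x" and L: "L > 0"
  shows "\<exists>y\<in>{0..L}. f x = f y"
proof -
  define n where "n = \<lfloor>x / L\<rfloor>"
  define y where "y = x - real_of_int n * L"
  have "real_of_int n \<le> x / L" "x / L < real_of_int n + 1" unfolding n_def by linarith+
  then have "real_of_int n * L \<le> x" "x < (real_of_int n + 1) * L" using L by (auto simp: field_simps)
  then have "y \<in> {0..L}" unfolding y_def by (auto simp: algebra_simps)
  moreover have "f (y + real_of_int n * L) = f y" by (rule periodic_int[where f=f and L=L, OF per])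
  ultimately show ?thesis unfolding y_def by auto
qed

lemma gam_s_formula:
  fixes \<alpha> \<beta> \<alpha>' :: "real \<Rightarrow> complex"
  assumes d\<alpha>: "\<And>x. (\<alpha> has_vector_derivative \<alpha>' x) (at x)" and c\<beta>: "continuous_on UNIV \<beta>"
  shows "gam_s \<alpha> \<beta> t s = ((\<alpha>' (s+t) + \<alpha>' (s-t)) + (\<beta> (s+t) - \<beta> (s-t))) / 2"
proof -
  define R where "R = \<bar>s\<bar> + \<bar>t\<bar> + 2"
  define Fb where "Fb x = integral {-R..x} \<beta>" for x
  have cR: "continuous_on {a..b} \<beta>" for a b by (rule continuous_on_subset[OF c\<beta>]) auto
  have dFb: "(Fb has_vector_derivative \<beta> y) (at y)" if "-R < y" "y < R" for y
    using integral_has_vector_derivative[OF cR, of y "-R" R] that at_within_Icc_at[of "-R" y R]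
    unfolding Fb_def by auto
  have int: "\<beta> integrable_on {a..b}" for a b by (rule integrable_continuous_interval[OF cR])
  have SI: "signed_integral p q \<beta> = Fb q - Fb p" if "-R \<le> p" "-R \<le> q" for p q
  proof (cases "p \<le> q")
    case True
    have "integral {-R..p} \<beta> + integral {p..q} \<beta> = integral {-R..q} \<beta>"
      by (rule Henstock_Kurzweil_Integration.integral_combine[OF that(1) True int])
    then show ?thesis using True unfolding signed_integral_def Fb_def by (simp add: algebra_simps)
  next
    case False
    have "integral {-R..q} \<beta> + integral {q..p} \<beta> = integral {-R..p} \<beta>"
      by (rule Henstock_Kurzweil_Integration.integral_combine[OF that(2) _ int]) (use False in auto)
    then show ?thesis using False unfolding signed_integral_def Fb_def by (simp add: algebra_simps)
  qed
  define G where "G y = (\<alpha> (y + t) + \<alpha> (y + -t)) / 2 + (Fb (y + t) - Fb (y + -t)) / 2" for y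
  have eq: "G y = gam \<alpha> \<beta> t y" if "y \<in> ball s 1" for y
  proof -
    have "-R \<le> y - t" "-R \<le> y + t" using that unfolding R_def by (auto simp: dist_real_def)
    then show ?thesis unfolding G_def gam_def using SI[of "y - t" "y + t"] by simp
  qed
  have i1: "-R < s + t" "s + t < R" "-R < s - t" "s - t < R" unfolding R_def by auto
  have dG: "(G has_vector_derivative ((\<alpha>' (s+t) + \<alpha>' (s-t)) + (\<beta> (s+t) - \<beta> (s-t))) / 2) (at s)"
  proof -
    have a1: "((\<lambda>y. \<alpha> (y + t)) has_vector_derivative \<alpha>' (s+t)) (at s)" by (rule shift_vd) (rule d\<alpha>)
    have a2: "((\<lambda>y. \<alpha> (y + -t)) has_vector_derivative \<alpha>' (s-t)) (at s)"
      by (rule shift_vd) (use d\<alpha>[of "s + -t"] in simp)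
    have f1: "((\<lambda>y. Fb (y + t)) has_vector_derivative \<beta> (s+t)) (at s)"
      by (rule shift_vd) (rule dFb[OF i1(1,2)])
    have f2: "((\<lambda>y. Fb (y + -t)) has_vector_derivative \<beta> (s-t)) (at s)"
      by (rule shift_vd) (use dFb[OF i1(3,4)] in simp)
    have "(G has_vector_derivative (\<alpha>' (s+t) + \<alpha>' (s-t)) / 2 + (\<beta> (s+t) - \<beta> (s-t)) / 2) (at s)"
      unfolding G_def
      by (intro has_vector_derivative_add has_vector_derivative_divide has_vector_derivative_diff a1 a2 f1 f2)
    then show ?thesis by (simp add: add_divide_distrib)
  qed
  have "((\<lambda>y. gam \<alpha> \<beta> t y) has_vector_derivative ((\<alpha>' (s+t) + \<alpha>' (s-t)) + (\<beta> (s+t) - \<beta> (s-t))) / 2) (at s)"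
    by (rule has_vector_derivative_transform_within_open[OF dG, of "ball s 1"]) (use eq in auto)
  then show ?thesis unfolding gam_s_def by (rule vector_derivative_at)
qed


theorem lemma2p10:
  fixes L :: real and \<alpha> \<beta> :: "real \<Rightarrow> complex" and \<psi> \<psi>t :: "real \<Rightarrow> real"
  assumes L: "L > 0"
    and smooth_\<alpha>: "smooth_fun \<alpha>" and smooth_\<beta>: "smooth_fun \<beta>"
    and per_\<alpha>: "\<And>x. \<alpha> (x + L) = \<alpha> x" and per_\<beta>: "\<And>x. \<beta> (x + L) = \<beta> x"
    and nz: "\<And>x. vector_derivative \<alpha> (at x) \<noteq> 0"
    and orth: "\<And>x. \<beta> x \<bullet> vector_derivative \<alpha> (at x) = 0"
    and unit: "\<And>x. (norm (vector_derivative \<alpha> (at x)))\<^sup>2 + (norm (\<beta> x))\<^sup>2 = 1"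
    and smooth_\<psi>: "smooth_fun \<psi>" and smooth_\<psi>t: "smooth_fun \<psi>t"
    and a: "\<And>x. vector_derivative \<alpha> (at x) + \<beta> x = Complex (cos (\<psi> x)) (sin (\<psi> x))"
    and b: "\<And>x. vector_derivative \<alpha> (at x) - \<beta> x = - Complex (cos (\<psi>t x)) (sin (\<psi>t x))"
    and rot: "rotation_index \<alpha> L = 0"
    and cont: "unit_tangent_continuous \<alpha> \<beta>"
  shows "\<not> (\<exists>s0 s1. 0 < s1 - s0 \<and> s1 - s0 < L \<and> \<psi> s0 = \<psi>t r \<and> \<psi> s1 = \<psi>t r)"
proof
  assume "\<exists>s0 s1. 0 < s1 - s0 \<and> s1 - s0 < L \<and> \<psi> s0 = \<psi>t r \<and> \<psi> s1 = \<psi>t r"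
  then obtain s0 where s0: "\<psi> s0 = \<psi>t r" by blast
  obtain \<alpha>' where d\<alpha>: "\<And>x. (\<alpha> has_vector_derivative \<alpha>' x) (at x)" and c\<alpha>': "continuous_on UNIV \<alpha>'"
    using smooth_deriv[OF smooth_\<alpha>] by blast
  have va: "vector_derivative \<alpha> (at x) = \<alpha>' x" for x using d\<alpha> vector_derivative_at by blast
  have c\<beta>: "continuous_on UNIV \<beta>" using smooth_deriv[OF smooth_\<beta>] by blast
  obtain d\<psi> where d\<psi>v: "\<And>x. (\<psi> has_vector_derivative d\<psi> x) (at x)" and cd\<psi>: "continuous_on UNIV d\<psi>"
      and c\<psi>: "continuous_on UNIV \<psi>"
    using smooth_deriv[OF smooth_\<psi>] by blast
  obtain d\<psi>t where d\<psi>tv: "\<And>x. (\<psi>t has_vector_derivative d\<psi>t x) (at x)" and c\<psi>t: "continuous_on UNIV \<psi>t"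
    using smooth_deriv[OF smooth_\<psi>t] by blast
  have dpsi: "(\<psi> has_real_derivative d\<psi> x) (at x)" for x
    using d\<psi>v by (simp add: has_real_derivative_iff_has_vector_derivative)
  have dpsit: "(\<psi>t has_real_derivative d\<psi>t x) (at x)" for x
    using d\<psi>tv by (simp add: has_real_derivative_iff_has_vector_derivative)
  have cc: "Complex (cos y) (sin y) = cis y" for y by (simp add: complex_eq_iff)
  have A: "\<alpha>' x + \<beta> x = cis (\<psi> x)" for x using a[of x] va cc by simp
  have B: "\<alpha>' x - \<beta> x = - cis (\<psi>t x)" for x using b[of x] va cc by simp
  have aeq: "2 * \<alpha>' x = cis (\<psi> x) - cis (\<psi>t x)" for x
  proof -
    have "2 * \<alpha>' x = (\<alpha>' x + \<beta> x) + (\<alpha>' x - \<beta> x)" by simp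
    then show ?thesis unfolding A B by simp
  qed
  have GS: "gam_s \<alpha> \<beta> t s = (cis (\<psi> (s+t)) - cis (\<psi>t (s-t))) / 2" for t s
  proof -
    have "gam_s \<alpha> \<beta> t s = ((\<alpha>' (s+t) + \<alpha>' (s-t)) + (\<beta> (s+t) - \<beta> (s-t))) / 2"
      by (rule gam_s_formula[OF d\<alpha> c\<beta>])
    also have "(\<alpha>' (s+t) + \<alpha>' (s-t)) + (\<beta> (s+t) - \<beta> (s-t)) = (\<alpha>' (s+t) + \<beta> (s+t)) + (\<alpha>' (s-t) - \<beta> (s-t))"
      by (simp add: algebra_simps)
    finally show ?thesis unfolding A B by simp
  qed
  have NC: "\<And>k u v. \<psi> u - \<psi>t v = 2*pi*real_of_int k \<Longrightarrow> d\<psi> u > 0 \<Longrightarrow> d\<psi>t v < 0 \<Longrightarrow> False"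
    using no_cross[OF cont GS dpsi dpsit] by blast
  have per\<alpha>': "\<alpha>' (x + L) = \<alpha>' x" for x
  proof -
    have "((\<lambda>y. \<alpha> (y + L)) has_vector_derivative \<alpha>' (x + L)) (at x)" by (rule shift_vd) (rule d\<alpha>)
    then have "(\<alpha> has_vector_derivative \<alpha>' (x + L)) (at x)" using per_\<alpha> by simp
    then show ?thesis using d\<alpha>[of x] by (rule vector_derivative_unique_at)
  qed
  have cp: "cis (\<psi> (x + L)) = cis (\<psi> x)" for x using A[of "x+L"] A[of x] per\<alpha>' per_\<beta> by simp
  have cpt: "cis (\<psi>t (x + L)) = cis (\<psi>t x)" for x using B[of "x+L"] B[of x] per\<alpha>' per_\<beta> by simp
  have shc: "continuous_on UNIV (\<lambda>x. f (x + L) - f x)" if "continuous_on UNIV f" for f :: "real \<Rightarrow> real"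
    by (intro continuous_intros continuous_on_compose2[OF that]) auto
  have i1: "\<exists>k::int. \<psi> (x + L) - \<psi> x = 2*pi*k" for x
  proof -
    obtain k :: int where "\<psi> (x + L) = \<psi> x + 2*pi*k" using cis_eq_int[OF cp] by blast
    then show ?thesis by (intro exI[of _ k]) simp
  qed
  have e1: "\<psi> (x + L) - \<psi> x = \<psi> (0 + L) - \<psi> 0" for x
    by (rule const_2pi[OF shc[OF c\<psi>] i1])
  obtain m :: int where m: "\<psi> (0 + L) = \<psi> 0 + 2*pi*m" using cis_eq_int[OF cp] by blast
  have pm: "\<psi> (x + L) = \<psi> x + 2*pi*m" for x using e1[of x] m by linarith
  have i2: "\<exists>k::int. \<psi>t (x + L) - \<psi>t x = 2*pi*k" for x
  proof -
    obtain k :: int where "\<psi>t (x + L) = \<psi>t x + 2*pi*k" using cis_eq_int[OF cpt] by blast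
    then show ?thesis by (intro exI[of _ k]) simp
  qed
  have e2: "\<psi>t (x + L) - \<psi>t x = \<psi>t (0 + L) - \<psi>t 0" for x
    by (rule const_2pi[OF shc[OF c\<psi>t] i2])
  obtain n :: int where n: "\<psi>t (0 + L) = \<psi>t 0 + 2*pi*n" using cis_eq_int[OF cpt] by blast
  have pn: "\<psi>t (x + L) = \<psi>t x + 2*pi*n" for x using e2[of x] n by linarith
  define h where "h x = sin ((\<psi> x - \<psi>t x) / 2)" for x
  define M where "M x = (\<psi> x + \<psi>t x) / 2" for x
  have apol: "\<alpha>' x = \<i> * cis (M x) * complex_of_real (h x)" for x
  proof -
    have "2 * \<alpha>' x = 2 * (\<i> * cis (M x) * complex_of_real (h x))"
      unfolding aeq cis_diff M_def h_def by simp
    then show ?thesis by simp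
  qed
  have hnz: "h x \<noteq> 0" for x using nz[of x] va apol by auto
  have ch: "continuous_on UNIV h" unfolding h_def
    by (intro continuous_intros continuous_on_compose2[OF c\<psi>] continuous_on_compose2[OF c\<psi>t]) auto
  have conn: "connected (range h)" by (rule connected_continuous_image[OF ch connected_UNIV])
  have hsign: "h 0 > 0 \<longleftrightarrow> h x > 0" for x
  proof -
    have "0 \<notin> range h" using hnz by auto
    then show ?thesis using connectedD_interval[OF conn, of "h 0" "h x" 0] connectedD_interval[OF conn, of "h x" "h 0" 0]
      hnz[of 0] hnz[of x] by (auto simp: not_less order_le_less)
  qed
  define \<theta>0 where "\<theta>0 x = M x + (if h 0 > 0 then pi/2 else - pi/2)" for x
  have apol2: "\<alpha>' x = cis (\<theta>0 x) * complex_of_real \<bar>h x\<bar>" for x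
  proof (cases "h 0 > 0")
    case True
    then have "h x > 0" using hsign by blast
    moreover have "cis (\<theta>0 x) = cis (M x) * \<i>" using True unfolding \<theta>0_def by (simp add: cis_mult[symmetric])
    ultimately show ?thesis unfolding apol by simp
  next
    case False
    then have "h x < 0" using hsign hnz[of x] by (meson linorder_neqE_linordered_idom)
    moreover have "cis (\<theta>0 x) = cis (M x) * (- \<i>)" using False unfolding \<theta>0_def by (simp add: complex_eq_iff cos_diff sin_diff)
    ultimately show ?thesis unfolding apol by simp
  qed
  have sgn\<alpha>: "sgn (vector_derivative \<alpha> (at x)) = cis (\<theta>0 x)" for x
  proof -
    have p: "\<bar>h x\<bar> > 0" using hnz by simp
    have "sgn (cis (\<theta>0 x) * complex_of_real \<bar>h x\<bar>) = cis (\<theta>0 x)"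
      using p by (simp add: sgn_mult sgn_of_real)
    then show ?thesis using va apol2 by simp
  qed
  have c\<theta>0: "continuous_on UNIV \<theta>0" unfolding \<theta>0_def M_def
    by (intro continuous_intros continuous_on_compose2[OF c\<psi>] continuous_on_compose2[OF c\<psi>t]) auto
  define \<theta> where "\<theta> = (SOME \<theta> :: real \<Rightarrow> real. continuous_on UNIV \<theta> \<and>
        (\<forall>t. sgn (vector_derivative \<alpha> (at t)) = cis (\<theta> t)))"
  have "\<exists>\<theta> :: real \<Rightarrow> real. continuous_on UNIV \<theta> \<and> (\<forall>t. sgn (vector_derivative \<alpha> (at t)) = cis (\<theta> t))"
    using c\<theta>0 sgn\<alpha> by blast
  then have \<theta>P: "continuous_on UNIV \<theta> \<and> (\<forall>t. sgn (vector_derivative \<alpha> (at t)) = cis (\<theta> t))"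
    unfolding \<theta>_def by (rule someI_ex)
  then have \<theta>: "continuous_on UNIV \<theta>" "\<And>t. sgn (vector_derivative \<alpha> (at t)) = cis (\<theta> t)"
    by auto
  have rot0: "(\<theta> L - \<theta> 0) / (2 * pi) = 0" using rot unfolding rotation_index_def Let_def \<theta>_def .
  have thd: "\<theta> x - \<theta>0 x = \<theta> 0 - \<theta>0 0" for x
  proof (rule const_2pi[where f="\<lambda>x. \<theta> x - \<theta>0 x"])
    show "continuous_on UNIV (\<lambda>x. \<theta> x - \<theta>0 x)" by (intro continuous_intros \<theta>(1) c\<theta>0)
    show "\<exists>k::int. \<theta> y - \<theta>0 y = 2 * pi * real_of_int k" for y
    proof -
      have "cis (\<theta> y) = cis (\<theta>0 y)" using \<theta>(2)[of y] sgn\<alpha>[of y] by simp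
      then obtain k :: int where "\<theta> y = \<theta>0 y + 2*pi*k" using cis_eq_int by blast
      then show ?thesis by (intro exI[of _ k]) simp
    qed
  qed
  have "\<theta> L = \<theta> 0" using rot0 by simp
  then have "\<theta>0 L = \<theta>0 0" using thd[of L] by linarith
  then have "\<psi> (0 + L) + \<psi>t (0 + L) = \<psi> 0 + \<psi>t 0" unfolding \<theta>0_def M_def by simp
  then have "2*pi*(real_of_int m + real_of_int n) = 0" using m n by (simp add: algebra_simps)
  then have mn: "real_of_int m + real_of_int n = 0" by simp
  have m0: "m = 0"
  proof (rule ccontr)
    assume "m \<noteq> 0"
    define D where "D x = (\<psi> x - \<psi>t x) / 2" for x
    have cD: "continuous_on UNIV D" unfolding D_def
      by (intro continuous_intros continuous_on_compose2[OF c\<psi>] continuous_on_compose2[OF c\<psi>t]) auto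
    have connD: "connected (range D)" by (rule connected_continuous_image[OF cD connected_UNIV])
    have nm: "real_of_int n = - real_of_int m" using mn by linarith
    have DL: "D L = D 0 + 2*pi*m" using m n nm unfolding D_def by (simp add: field_simps)
    have "\<exists>j::int. (D 0 \<le> pi * j \<and> pi * j \<le> D L) \<or> (D L \<le> pi * j \<and> pi * j \<le> D 0)"
    proof (cases "m > 0")
      case True
      define j where "j = \<lceil>D 0 / pi\<rceil>"
      have "D 0 / pi \<le> j" "j < D 0 / pi + 1" unfolding j_def by linarith+
      then have "D 0 \<le> pi * j" "pi * j < D 0 + pi" by (auto simp: field_simps)
      moreover have "pi \<le> 2*pi*m"
      proof -
        have "1 \<le> real_of_int m" using True by simp
        then have "pi * 1 \<le> pi * real_of_int m" by (intro mult_left_mono) auto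
        then show ?thesis by simp
      qed
      ultimately show ?thesis using DL by (intro exI[of _ j] disjI1) linarith
    next
      case False
      then have "m < 0" using \<open>m \<noteq> 0\<close> by simp
      define j where "j = \<lfloor>D 0 / pi\<rfloor>"
      have "j \<le> D 0 / pi" "D 0 / pi < j + 1" unfolding j_def by linarith+
      then have "pi * j \<le> D 0" "D 0 < pi * j + pi" by (auto simp: field_simps)
      moreover have "2*pi*m \<le> - pi"
      proof -
        have "real_of_int m \<le> -1" using \<open>m < 0\<close> by simp
        then have "pi * real_of_int m \<le> pi * (-1)" by (intro mult_left_mono) auto
        moreover have "2*pi*real_of_int m = pi * real_of_int m + pi * real_of_int m" by simp
        ultimately show ?thesis using pi_gt_zero by linarith
      qed
      ultimately show ?thesis using DL by (intro exI[of _ j] disjI2) linarith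
    qed
    then obtain j :: int where "(D 0 \<le> pi * j \<and> pi * j \<le> D L) \<or> (D L \<le> pi * j \<and> pi * j \<le> D 0)" by blast
    then have "pi * j \<in> range D"
      using connectedD_interval[OF connD, of "D 0" "D L" "pi * j"] connectedD_interval[OF connD, of "D L" "D 0" "pi * j"]
      by auto
    then obtain y where "D y = pi * j" by auto
    then have "h y = 0" unfolding h_def D_def by simp
    then show False using hnz by blast
  qed
  have n0: "n = 0" using mn m0 by simp
  have perp: "\<psi> (x + L) = \<psi> x" for x using pm m0 by simp
  have perpt: "\<psi>t (x + L) = \<psi>t x" for x using pn n0 by simp
  have cI: "continuous_on {0..L} f" if "continuous_on UNIV f" for f :: "real \<Rightarrow> real"
    by (rule continuous_on_subset[OF that]) auto
  have ne: "{0..L} \<noteq> {}" using L by auto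
  obtain xa where xa: "xa \<in> {0..L}" "\<And>y. y \<in> {0..L} \<Longrightarrow> \<psi> xa \<le> \<psi> y"
    using continuous_attains_inf[OF compact_Icc ne cI[OF c\<psi>]] by blast
  obtain xb where xb: "xb \<in> {0..L}" "\<And>y. y \<in> {0..L} \<Longrightarrow> \<psi> y \<le> \<psi> xb"
    using continuous_attains_sup[OF compact_Icc ne cI[OF c\<psi>]] by blast
  obtain ya where ya: "ya \<in> {0..L}" "\<And>y. y \<in> {0..L} \<Longrightarrow> \<psi>t ya \<le> \<psi>t y"
    using continuous_attains_inf[OF compact_Icc ne cI[OF c\<psi>t]] by blast
  obtain yb where yb: "yb \<in> {0..L}" "\<And>y. y \<in> {0..L} \<Longrightarrow> \<psi>t y \<le> \<psi>t yb"
    using continuous_attains_sup[OF compact_Icc ne cI[OF c\<psi>t]] by blast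
  have gxa: "\<psi> xa \<le> \<psi> x" for x using periodic_reduce[where f=\<psi>, OF perp L, of x] xa by auto
  have gxb: "\<psi> x \<le> \<psi> xb" for x using periodic_reduce[where f=\<psi>, OF perp L, of x] xb by auto
  have gya: "\<psi>t ya \<le> \<psi>t x" for x using periodic_reduce[where f=\<psi>t, OF perpt L, of x] ya by auto
  have gyb: "\<psi>t x \<le> \<psi>t yb" for x using periodic_reduce[where f=\<psi>t, OF perpt L, of x] yb by auto
  have "(\<alpha>' has_integral (\<alpha> L - \<alpha> 0)) {0..L}"
    by (rule fundamental_theorem_of_calculus) (use L in \<open>auto intro: has_vector_derivative_at_within[OF d\<alpha>]\<close>)
  moreover have "\<alpha> L = \<alpha> 0" using per_\<alpha>[of 0] by simp
  ultimately have "(\<alpha>' has_integral 0) {0..L}" by simp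
  then have "((\<lambda>x. 2 * \<alpha>' x) has_integral 0) {0..L}" using has_integral_mult_right[of \<alpha>' 0 "{0..L}" 2] by simp
  then have idiff: "((\<lambda>x. cis (\<psi> x) - cis (\<psi>t x)) has_integral 0) {0..L}" unfolding aeq .
  define I where "I = integral {0..L} (\<lambda>x. cis (\<psi> x))"
  have "continuous_on {0..L} (\<lambda>x. cis (\<psi> x))"
    by (intro continuous_intros continuous_on_compose2[OF c\<psi>]) auto
  then have ipsi: "((\<lambda>x. cis (\<psi> x)) has_integral I) {0..L}"
    unfolding I_def by (intro integrable_integral integrable_continuous_interval)
  have "((\<lambda>x. cis (\<psi> x) - (cis (\<psi> x) - cis (\<psi>t x))) has_integral (I - 0)) {0..L}"
    by (rule has_integral_diff[OF ipsi idiff])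
  then have ipsit: "((\<lambda>x. cis (\<psi>t x)) has_integral I) {0..L}" by simp
  define c0 where "c0 = \<psi>t r"
  have c0: "\<psi> s0 = c0" "\<psi>t r = c0" using s0 unfolding c0_def by auto
  have cL: "((\<lambda>x. cis c0) has_integral (complex_of_real L * cis c0)) {0..L}"
    using has_integral_const_real[of "cis c0" 0 L] L by (simp add: scaleR_conv_of_real)
  show False
  proof (cases "\<psi> xa = \<psi> xb")
    case True
    then have "\<psi> x = c0" for x using gxa[of x] gxb[of x] gxa[of s0] gxb[of s0] c0 by auto
    then have "I = complex_of_real L * cis c0" using has_integral_unique[OF ipsi] cL by simp
    then have "cis (\<psi>t 0) = cis c0" using const_contra[OF L cI[OF c\<psi>t]] ipsit by simp
    then have "\<alpha>' 0 = 0" using aeq[of 0] \<open>\<And>x. \<psi> x = c0\<close> by simp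
    then show False using nz[of 0] va by simp
  next
    case nc1: False
    show False
    proof (cases "\<psi>t ya = \<psi>t yb")
      case True
      then have "\<psi>t x = c0" for x using gya[of x] gyb[of x] gya[of r] gyb[of r] c0 by auto
      then have "I = complex_of_real L * cis c0" using has_integral_unique[OF ipsit] cL by simp
      then have "cis (\<psi> 0) = cis c0" using const_contra[OF L cI[OF c\<psi>]] ipsi by simp
      then have "\<alpha>' 0 = 0" using aeq[of 0] \<open>\<And>x. \<psi>t x = c0\<close> by simp
      then show False using nz[of 0] va by simp
    next
      case nc2: False
      have lt1: "\<psi> xa < \<psi> xb" using nc1 gxa[of xb] by simp
      have lt2: "\<psi>t ya < \<psi>t yb" using nc2 gya[of yb] by simp
      have K: "\<not> (\<psi> xa - \<psi>t yb < 2*pi*real_of_int k \<and> 2*pi*real_of_int k < \<psi> xb - \<psi>t ya)" for k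
        by (rule key[OF NC dpsi dpsit cd\<psi> L perp perpt gxa gxb xa(1) refl xb(1) refl gya gyb ya(1) refl yb(1) refl lt1 lt2])
      have b0: "\<psi> xa \<le> c0" "c0 \<le> \<psi>t yb" "c0 \<le> \<psi> xb" "\<psi>t ya \<le> c0"
        using gxa[of s0] gyb[of r] gxb[of s0] gya[of r] c0 by auto
      have "\<psi> xa = \<psi>t yb \<or> \<psi> xb = \<psi>t ya" using K[of 0] b0 by auto
      then show False
      proof
        assume e: "\<psi> xa = \<psi>t yb"
        then have e2: "\<psi> xa = c0" "\<psi>t yb = c0" using b0 by auto
        have "\<psi> xb - \<psi>t ya \<le> 2*pi" using K[of 1] e by auto
        show False
        proof (rule closure_contra[OF L cI[OF c\<psi>] cI[OF c\<psi>t] ipsi ipsit, of c0 "\<psi> xb - c0" xa xb])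
          show "c0 \<le> \<psi> x \<and> \<psi> x \<le> c0 + (\<psi> xb - c0)" if "x \<in> {0..L}" for x using gxa[of x] gxb[of x] e2 by auto
          show "c0 + (\<psi> xb - c0) - 2*pi \<le> \<psi>t x \<and> \<psi>t x \<le> c0" if "x \<in> {0..L}" for x
            using gya[of x] gyb[of x] e2 \<open>\<psi> xb - \<psi>t ya \<le> 2*pi\<close> by auto
          show "0 < \<psi> xb - c0" using lt1 e2 by simp
          show "\<psi> xb - c0 \<le> 2*pi" using \<open>\<psi> xb - \<psi>t ya \<le> 2*pi\<close> b0 by simp
          show "xa \<in> {0..L}" "\<psi> xa = c0" "xb \<in> {0..L}" "\<psi> xb = c0 + (\<psi> xb - c0)" using xa xb e2 by auto
        qed
      next
        assume e: "\<psi> xb = \<psi>t ya"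
        then have e2: "\<psi> xb = c0" "\<psi>t ya = c0" using b0 by auto
        have "\<psi> xa - \<psi>t yb \<ge> -2*pi" using K[of "-1"] e by auto
        show False
        proof (rule closure_contra[OF L cI[OF c\<psi>t] cI[OF c\<psi>] ipsit ipsi, of c0 "\<psi>t yb - c0" ya yb])
          show "c0 \<le> \<psi>t x \<and> \<psi>t x \<le> c0 + (\<psi>t yb - c0)" if "x \<in> {0..L}" for x using gya[of x] gyb[of x] e2 by auto
          show "c0 + (\<psi>t yb - c0) - 2*pi \<le> \<psi> x \<and> \<psi> x \<le> c0" if "x \<in> {0..L}" for x
            using gxa[of x] gxb[of x] e2 \<open>\<psi> xa - \<psi>t yb \<ge> -2*pi\<close> by auto
          show "0 < \<psi>t yb - c0" using lt2 e2 by simp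
          show "\<psi>t yb - c0 \<le> 2*pi" using \<open>\<psi> xa - \<psi>t yb \<ge> -2*pi\<close> b0 by simp
          show "ya \<in> {0..L}" "\<psi>t ya = c0" "yb \<in> {0..L}" "\<psi>t yb = c0 + (\<psi>t yb - c0)" using ya yb e2 by auto
        qed
      qed
    qed
  qed
qed

end
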